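(* Let $M$ be a finite abelian group of order $m$ and $J$ a Jacobi function on $M$. Then there is a subset $S\subset\hat{M}$ and a function $i\colon S\to\hat{M}$ such that \[ J(\alpha,\beta)=\frac{1}{m}\sum_{x\in S}\alpha(i(x))\,\beta(i(x)x^{-1})\quad\text{for all }\alpha,\beta\in M. \] The set $S$ is closed under inversion, and $i(x)=x\,i(x^{-1})$ for all $x\in S$. Moreover, one of the following holds: (a) there is $c\in\hat{M}$ with $c^2=1$ such that $S=\hat{M}\setminus\{c\}$ and $i\colon\hat{M}\setminus\{c\}\to\hat{M}\setminus\{1\}$ is a bijection; or (b) $S=\hat{M}$ and $i\colon\hat{M}\to\hat{M}$ is a bijection.
   Context: $M$ is written multiplicatively with identity $1$; $\delta(\alpha)=1$ if $\alpha=1$ and $0$ otherwise. $\hat{M}$ is the Pontryagin dual of $M$, written multiplicatively; for $\alpha\in M$, $x\in\hat{M}$, $\alpha(x)$ denotes the value of the character $x$ at $\alpha$. A Jacobi function on $M$ is a function $J\colon M\times M\to\mathbf{C}$ satisfying: (A) $J(\alpha,\beta)=J(\beta,\alpha)$; (B) with $J^*(\alpha,\beta)=-\delta(\alpha)-\delta(\beta)+J(\alpha,\beta)$, $J^*(\alpha,\beta)J^*(\alpha\beta,\gamma)=J^*(\alpha,\beta\gamma)J^*(\beta,\gamma)$; (C) $\sum_{\beta\in M}J(\alpha_1\beta,\alpha_2\beta^{-1})J(\alpha_3\beta,\alpha_4\beta^{-1})=J(\alpha_1\alpha_4,\alpha_2\alpha_3)$; all for all elements of $M$. *)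

theory Defs
  imports "HOL-Algebra.Group" Complex_Main
begin

definition characters :: "('a, 'b) monoid_scheme \<Rightarrow> ('a \<Rightarrow> complex) set" where
  "characters G = {\<chi>. \<chi> \<in> extensional (carrier G)
      \<and> (\<forall>a\<in>carrier G. norm (\<chi> a) = 1)
      \<and> (\<forall>a\<in>carrier G. \<forall>b\<in>carrier G. \<chi> (a \<otimes>\<^bsub>G\<^esub> b) = \<chi> a * \<chi> b)}"

definition char_mult :: "('a, 'b) monoid_scheme \<Rightarrow> ('a \<Rightarrow> complex) \<Rightarrow> ('a \<Rightarrow> complex) \<Rightarrow> ('a \<Rightarrow> complex)" where
  "char_mult G x y = (\<lambda>a\<in>carrier G. x a * y a)"

definition char_one :: "('a, 'b) monoid_scheme \<Rightarrow> ('a \<Rightarrow> complex)" where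
  "char_one G = (\<lambda>a\<in>carrier G. 1)"

definition char_inv :: "('a, 'b) monoid_scheme \<Rightarrow> ('a \<Rightarrow> complex) \<Rightarrow> ('a \<Rightarrow> complex)" where
  "char_inv G x = (\<lambda>a\<in>carrier G. inverse (x a))"

definition kdelta :: "('a, 'b) monoid_scheme \<Rightarrow> 'a \<Rightarrow> complex" where
  "kdelta G a = (if a = \<one>\<^bsub>G\<^esub> then 1 else 0)"

definition jstar :: "('a, 'b) monoid_scheme \<Rightarrow> ('a \<Rightarrow> 'a \<Rightarrow> complex) \<Rightarrow> 'a \<Rightarrow> 'a \<Rightarrow> complex" where
  "jstar G J a b = - kdelta G a - kdelta G b + J a b"

definition jacobi_function :: "('a, 'b) monoid_scheme \<Rightarrow> ('a \<Rightarrow> 'a \<Rightarrow> complex) \<Rightarrow> bool" where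
  "jacobi_function G J \<longleftrightarrow>
     (\<forall>a\<in>carrier G. \<forall>b\<in>carrier G. J a b = J b a)
   \<and> (\<forall>a\<in>carrier G. \<forall>b\<in>carrier G. \<forall>c\<in>carrier G.
        jstar G J a b * jstar G J (a \<otimes>\<^bsub>G\<^esub> b) c = jstar G J a (b \<otimes>\<^bsub>G\<^esub> c) * jstar G J b c)
   \<and> (\<forall>a1\<in>carrier G. \<forall>a2\<in>carrier G. \<forall>a3\<in>carrier G. \<forall>a4\<in>carrier G.
        (\<Sum>b\<in>carrier G. J (a1 \<otimes>\<^bsub>G\<^esub> b) (a2 \<otimes>\<^bsub>G\<^esub> inv\<^bsub>G\<^esub> b)
                          * J (a3 \<otimes>\<^bsub>G\<^esub> b) (a4 \<otimes>\<^bsub>G\<^esub> inv\<^bsub>G\<^esub> b))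
        = J (a1 \<otimes>\<^bsub>G\<^esub> a4) (a2 \<otimes>\<^bsub>G\<^esub> a3))"

end

theory Submission
  imports Defs "HOL-Algebra.Multiplicative_Group"
begin



lemma complex_root_ex:
  assumes "0 < (n::nat)" shows "\<exists>w::complex. w ^ n = z"
proof -
  have "rcis (root n (cmod z)) (Arg z / n) ^ n = rcis (root n (cmod z) ^ n) (real n * (Arg z / n))"
    by (rule DeMoivre2)
  also have "\<dots> = rcis (cmod z) (Arg z)" using assms by (simp add: real_root_pow_pos2)
  also have "\<dots> = z" by (rule rcis_cmod_Arg)
  finally show ?thesis by blast
qed

locale fag = comm_group G for G (structure) +
  assumes fin: "finite (carrier G)"
begin

abbreviation "mm \<equiv> card (carrier G)"

lemma mm_pos: "mm > 0"
  using fin one_closed card_gt_0_iff by blast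

lemma pow_mm: "a \<in> carrier G \<Longrightarrow> a [^] mm = \<one>"
  using pow_order_eq_1 by (simp add: order_def)

definition subm :: "'a set \<Rightarrow> bool" where
  "subm H \<longleftrightarrow> H \<subseteq> carrier G \<and> \<one> \<in> H \<and> (\<forall>a\<in>H. \<forall>b\<in>H. a \<otimes> b \<in> H)"

definition pchar :: "'a set \<Rightarrow> ('a \<Rightarrow> complex) \<Rightarrow> bool" where
  "pchar H \<chi> \<longleftrightarrow> (\<forall>a\<in>H. \<chi> a \<noteq> 0) \<and> (\<forall>a\<in>H. \<forall>b\<in>H. \<chi> (a \<otimes> b) = \<chi> a * \<chi> b)"

lemma subm_pow: "subm H \<Longrightarrow> h \<in> H \<Longrightarrow> h [^] (n::nat) \<in> H"
  by (induction n) (auto simp: subm_def subsetD)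

lemma subm_inv: assumes "subm H" "h \<in> H" shows "inv h \<in> H"
proof -
  have hc: "h \<in> carrier G" using assms by (auto simp: subm_def)
  have "h [^] (mm - 1) \<otimes> h = h [^] mm"
    using mm_pos hc by (metis Suc_diff_1 nat_pow_Suc)
  then have "h [^] (mm - 1) \<otimes> h = \<one>" using pow_mm hc by simp
  then have "inv h = h [^] (mm - 1)"
    using hc by (metis inv_char nat_pow_closed m_comm)
  then show ?thesis using subm_pow assms by simp
qed

lemma pchar_one: "pchar H \<chi> \<Longrightarrow> \<one> \<in> H \<Longrightarrow> \<chi> \<one> = 1"
  unfolding pchar_def by (metis l_one one_closed mult_cancel_right1 mult.commute)

lemma pchar_pow: "subm H \<Longrightarrow> pchar H \<chi> \<Longrightarrow> h \<in> H \<Longrightarrow> \<chi> (h [^] (n::nat)) = \<chi> h ^ n"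
proof (induction n)
  case 0 then show ?case using pchar_one by (auto simp: subm_def)
next
  case (Suc n)
  then have "h [^] Suc n = h [^] n \<otimes> h" by simp
  moreover have "h [^] n \<in> H" using Suc subm_pow by blast
  ultimately show ?case using Suc by (simp add: pchar_def)
qed

lemma ext_step:
  assumes H: "subm H" and chi: "pchar H \<chi>" and g: "g \<in> carrier G" "g \<notin> H"
    and k: "0 < k" "g [^] k \<in> H" "\<And>r. 0 < r \<Longrightarrow> r < k \<Longrightarrow> g [^] r \<notin> H"
    and w: "w ^ k = \<chi> (g [^] k)"
  shows "\<exists>\<chi>'. subm {h \<otimes> g [^] (j::nat) | h j. h \<in> H} \<and> pchar {h \<otimes> g [^] (j::nat) | h j. h \<in> H} \<chi>'
     \<and> (\<forall>h\<in>H. \<chi>' h = \<chi> h) \<and> \<chi>' g = w"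
proof -
  define H' where "H' = {h \<otimes> g [^] (j::nat) | h j. h \<in> H}"
  have Hc: "H \<subseteq> carrier G" using H by (auto simp: subm_def)
  have wnz: "w \<noteq> 0" using w chi k by (auto simp: pchar_def power_0_left)
  have wd: "\<chi> h * w ^ j = \<chi> h' * w ^ j'"
    if hh: "h \<in> H" "h' \<in> H" "h \<otimes> g [^] j = h' \<otimes> g [^] j'" "j' \<le> j" for h h' j j'
  proof -
    define d where "d = j - j'"
    have hc: "h \<in> carrier G" "h' \<in> carrier G" using hh Hc by auto
    have "h \<otimes> g [^] d \<otimes> g [^] j' = h' \<otimes> g [^] j'"
      using hh hc g by (simp add: d_def m_assoc nat_pow_mult)
    then have e1: "h \<otimes> g [^] d = h' " using hc g by (metis m_closed nat_pow_closed right_cancel)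
    then have "g [^] d = inv h \<otimes> h'" using hc g
      by (metis inv_closed l_inv l_one m_assoc nat_pow_closed)
    then have gd: "g [^] d \<in> H" using H hh subm_inv by (auto simp: subm_def)
    define q where "q = d div k"
    define r where "r = d mod k"
    have "d = k * q + r" by (simp add: q_def r_def)
    then have "g [^] d = (g [^] k) [^] q \<otimes> g [^] r" using g by (simp add: nat_pow_mult nat_pow_pow)
    then have "g [^] r = inv ((g [^] k) [^] q) \<otimes> g [^] d" using g
      by (metis inv_closed l_inv l_one m_assoc nat_pow_closed)
    then have "g [^] r \<in> H" using H gd subm_inv subm_pow k by (auto simp: subm_def)
    moreover have "r < k" using k by (simp add: r_def)
    ultimately have "r = 0" using k by blast
    then have "g [^] d = (g [^] k) [^] q" using \<open>g [^] d = (g [^] k) [^] q \<otimes> g [^] r\<close> g by simp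
    then have "h' = h \<otimes> (g [^] k) [^] q" using e1 by simp
    then have "\<chi> h' = \<chi> h * w ^ (k * q)"
      using chi H hh k subm_pow pchar_pow w by (simp add: pchar_def power_mult)
    moreover have "k * q = d" using \<open>d = k * q + r\<close> \<open>r = 0\<close> by simp
    ultimately have "\<chi> h' * w ^ j' = \<chi> h * w ^ (d + j')" by (simp add: power_add)
    then show ?thesis using hh by (simp add: d_def)
  qed
  define \<chi>' where "\<chi>' y = (let p = (SOME p. fst p \<in> H \<and> y = fst p \<otimes> g [^] snd p) in \<chi> (fst p) * w ^ snd p)" for y
  have chi'_eq: "\<chi>' (h \<otimes> g [^] j) = \<chi> h * w ^ j" if "h \<in> H" for h j
  proof -
    define p where "p = (SOME p::'a \<times> nat. fst p \<in> H \<and> h \<otimes> g [^] j = fst p \<otimes> g [^] snd p)"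
    have "\<exists>p::'a \<times> nat. fst p \<in> H \<and> h \<otimes> g [^] j = fst p \<otimes> g [^] snd p" using that by (rule_tac x="(h,j)" in exI) simp
    then have p: "fst p \<in> H" "h \<otimes> g [^] j = fst p \<otimes> g [^] snd p"
      unfolding p_def by (metis (mono_tags, lifting) someI_ex)+
    have "\<chi> (fst p) * w ^ snd p = \<chi> h * w ^ j"
    proof (cases "snd p \<le> j")
      case True then show ?thesis using wd[of h "fst p" j "snd p"] p that by simp
    next
      case False then show ?thesis using wd[of "fst p" h "snd p" j] p that by simp
    qed
    then show ?thesis unfolding \<chi>'_def p_def[symmetric] by (simp add: Let_def)
  qed
  have "subm H'"
    unfolding subm_def H'_def
  proof (intro conjI ballI)
    show "{h \<otimes> g [^] (j::nat) |h j. h \<in> H} \<subseteq> carrier G" using Hc g by auto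
    show "\<one> \<in> {h \<otimes> g [^] (j::nat) |h j. h \<in> H}" using H g by (auto simp: subm_def intro!: exI[of _ "\<one>"] exI[of _ "0::nat"])
    fix a b assume "a \<in> {h \<otimes> g [^] (j::nat) |h j. h \<in> H}" "b \<in> {h \<otimes> g [^] (j::nat) |h j. h \<in> H}"
    then obtain h1 j1 h2 j2 where ab: "a = h1 \<otimes> g [^] (j1::nat)" "b = h2 \<otimes> g [^] (j2::nat)" "h1 \<in> H" "h2 \<in> H" by auto
    then have "a \<otimes> b = (h1 \<otimes> h2) \<otimes> g [^] (j1 + j2)" using Hc g
      by (simp add: m_ac nat_pow_mult subsetD)
    then show "a \<otimes> b \<in> {h \<otimes> g [^] (j::nat) |h j. h \<in> H}" using ab H by (auto simp: subm_def)
  qed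
  moreover have "pchar H' \<chi>'"
    unfolding pchar_def H'_def
  proof (intro conjI ballI)
    fix a assume "a \<in> {h \<otimes> g [^] (j::nat) |h j. h \<in> H}"
    then obtain h j where "a = h \<otimes> g [^] (j::nat)" "h \<in> H" by auto
    then show "\<chi>' a \<noteq> 0" using chi'_eq chi wnz by (auto simp: pchar_def)
  next
    fix a b assume "a \<in> {h \<otimes> g [^] (j::nat) |h j. h \<in> H}" "b \<in> {h \<otimes> g [^] (j::nat) |h j. h \<in> H}"
    then obtain h1 j1 h2 j2 where ab: "a = h1 \<otimes> g [^] (j1::nat)" "b = h2 \<otimes> g [^] (j2::nat)" "h1 \<in> H" "h2 \<in> H" by auto
    then have "a \<otimes> b = (h1 \<otimes> h2) \<otimes> g [^] (j1 + j2)" using Hc g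
      by (simp add: m_ac nat_pow_mult subsetD)
    moreover have "h1 \<otimes> h2 \<in> H" using ab H by (auto simp: subm_def)
    ultimately show "\<chi>' (a \<otimes> b) = \<chi>' a * \<chi>' b"
      using ab chi'_eq chi by (simp add: pchar_def power_add)
  qed
  moreover have "\<forall>h\<in>H. \<chi>' h = \<chi> h"
    using chi'_eq[of _ 0] Hc by (auto simp: subsetD)
  moreover have "\<chi>' g = w"
    using chi'_eq[of \<one> 1] H g chi pchar_one by (simp add: subm_def)
  ultimately show ?thesis unfolding H'_def by blast
qed

lemma ext_all:
  "subm H \<Longrightarrow> pchar H \<chi> \<Longrightarrow> \<exists>\<psi>\<in>characters G. \<forall>h\<in>H. \<psi> h = \<chi> h"
proof (induction "card (carrier G - H)" arbitrary: H \<chi> rule: less_induct)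
  case less
  show ?case
  proof (cases "H = carrier G")
    case True
    define \<psi> where "\<psi> = restrict \<chi> (carrier G)"
    have "norm (\<chi> a) = 1" if a: "a \<in> carrier G" for a
    proof -
      have "\<chi> a ^ mm = \<chi> (a [^] mm)" using pchar_pow less True a by simp
      also have "\<dots> = 1" using pow_mm a pchar_one less by (simp add: subm_def)
      finally have "norm (\<chi> a) ^ mm = 1 ^ mm" by (metis norm_power norm_one power_one)
      then show ?thesis using power_eq_iff_eq_base[OF mm_pos] by (metis norm_ge_zero zero_le_one)
    qed
    then have "\<psi> \<in> characters G" using less True
      unfolding characters_def \<psi>_def pchar_def by auto
    then show ?thesis using True \<psi>_def by (intro bexI[of _ \<psi>]) auto
  next
    case False
    then obtain g where g: "g \<in> carrier G" "g \<notin> H" using less by (auto simp: subm_def)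
    define P where "P k = (0 < k \<and> g [^] k \<in> H)" for k :: nat
    have "P mm" using pow_mm g mm_pos less by (auto simp: P_def subm_def)
    define k where "k = (LEAST k. P k)"
    have Pk: "P k" using LeastI[of P, OF \<open>P mm\<close>] k_def by simp
    have kmin: "\<And>r. 0 < r \<Longrightarrow> r < k \<Longrightarrow> g [^] r \<notin> H"
      using not_less_Least[of _ P] k_def P_def by blast
    obtain w where w: "\<chi> (g [^] k) = w ^ k" using complex_root_ex Pk P_def by metis
    define H' where "H' = {h \<otimes> g [^] (j::nat) | h j. h \<in> H}"
    obtain \<chi>' where c': "subm H'" "pchar H' \<chi>'" "\<forall>h\<in>H. \<chi>' h = \<chi> h"
      using ext_step[OF less(2,3) g _ _ kmin w[symmetric]] Pk P_def H'_def by blast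
    have HH': "H \<subseteq> H'"
    proof
      fix h assume "h \<in> H"
      then have "h = h \<otimes> g [^] (0::nat)" "h \<in> carrier G" using less by (auto simp: subm_def)
      then show "h \<in> H'" using \<open>h \<in> H\<close> unfolding H'_def by blast
    qed
    have "g = \<one> \<otimes> g [^] (1::nat)" using g by simp
    then have "g \<in> H'" using less unfolding H'_def subm_def by blast
    then have "carrier G - H' \<subset> carrier G - H" using HH' g by blast
    then have "card (carrier G - H') < card (carrier G - H)"
      using fin by (meson finite_Diff psubset_card_mono)
    then obtain \<psi> where "\<psi> \<in> characters G" "\<forall>h\<in>H'. \<psi> h = \<chi>' h"
      using less(1) c' by blast
    then show ?thesis using c' HH' by (metis subsetD)
  qed
qed

end



context fag begin

abbreviation "X \<equiv> characters G"

lemma charD: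
  assumes "x \<in> X"
  shows "x \<in> extensional (carrier G)" "a \<in> carrier G \<Longrightarrow> norm (x a) = 1"
    "a \<in> carrier G \<Longrightarrow> b \<in> carrier G \<Longrightarrow> x (a \<otimes> b) = x a * x b"
  using assms unfolding characters_def by auto

lemma char_nz: "x \<in> X \<Longrightarrow> a \<in> carrier G \<Longrightarrow> x a \<noteq> 0"
  using charD(2) by fastforce

lemma char_1: "x \<in> X \<Longrightarrow> x \<one> = 1"
  using charD(3)[of x \<one> \<one>] char_nz[of x \<one>] by simp

lemma char_inv_val: "x \<in> X \<Longrightarrow> a \<in> carrier G \<Longrightarrow> x (inv a) = inverse (x a)"
  using charD(3)[of x a "inv a"] char_nz[of x a] char_1[of x]
  by (simp add: field_simps)

lemma char_pow: "x \<in> X \<Longrightarrow> a \<in> carrier G \<Longrightarrow> x (a [^] (n::nat)) = x a ^ n"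
  by (induction n) (simp_all add: char_1 charD(3))

lemma cm_val [simp]: "a \<in> carrier G \<Longrightarrow> char_mult G x y a = x a * y a"
  by (simp add: char_mult_def)
lemma ci_val [simp]: "a \<in> carrier G \<Longrightarrow> char_inv G x a = inverse (x a)"
  by (simp add: char_inv_def)
lemma co_val [simp]: "a \<in> carrier G \<Longrightarrow> char_one G a = 1"
  by (simp add: char_one_def)

lemma char_one_in: "char_one G \<in> X"
  unfolding characters_def char_one_def by auto

lemma char_mult_in: "x \<in> X \<Longrightarrow> y \<in> X \<Longrightarrow> char_mult G x y \<in> X"
  unfolding characters_def char_mult_def by (auto simp: norm_mult)

lemma char_inv_in: "x \<in> X \<Longrightarrow> char_inv G x \<in> X"
  unfolding characters_def char_inv_def by (auto simp: norm_inverse)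

lemma char_eqI: "x \<in> X \<Longrightarrow> y \<in> X \<Longrightarrow> (\<And>a. a \<in> carrier G \<Longrightarrow> x a = y a) \<Longrightarrow> x = y"
  using charD(1) extensionalityI by metis

lemma char_eq_iff: "x \<in> X \<Longrightarrow> y \<in> X \<Longrightarrow> x = y \<longleftrightarrow> (\<forall>a\<in>carrier G. x a = y a)"
  using char_eqI by blast

lemma bij_lmult: "b \<in> carrier G \<Longrightarrow> bij_betw (\<lambda>a. b \<otimes> a) (carrier G) (carrier G)"
  by (rule bij_betw_byWitness[where f'="\<lambda>a. inv b \<otimes> a"]) (auto simp: m_assoc[symmetric])

lemma orth1: assumes x: "x \<in> X"
  shows "(\<Sum>a\<in>carrier G. x a) = (if x = char_one G then of_nat mm else 0)"
proof (cases "x = char_one G")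
  case True then show ?thesis by simp
next
  case False
  then obtain b where b: "b \<in> carrier G" "x b \<noteq> 1"
    using char_eqI[OF x char_one_in] by auto
  have "(\<Sum>a\<in>carrier G. x a) = (\<Sum>a\<in>carrier G. x (b \<otimes> a))"
    using sum.reindex_bij_betw[OF bij_lmult[OF b(1)], of x] by simp
  also have "\<dots> = x b * (\<Sum>a\<in>carrier G. x a)"
    by (simp add: sum_distrib_left charD(3)[OF x b(1)])
  finally have "(1 - x b) * (\<Sum>a\<in>carrier G. x a) = 0" by (simp add: algebra_simps)
  then show ?thesis using b False by simp
qed

lemma orth1': assumes "x \<in> X" "y \<in> X"
  shows "(\<Sum>a\<in>carrier G. x a * inverse (y a)) = (if x = y then of_nat mm else 0)"
proof -
  have z: "char_mult G x (char_inv G y) \<in> X" using assms char_mult_in char_inv_in by blast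
  have "(\<Sum>a\<in>carrier G. x a * inverse (y a)) = (\<Sum>a\<in>carrier G. char_mult G x (char_inv G y) a)"
    by simp
  also have "\<dots> = (if char_mult G x (char_inv G y) = char_one G then of_nat mm else 0)"
    by (rule orth1[OF z])
  also have "(char_mult G x (char_inv G y) = char_one G) \<longleftrightarrow> x = y"
    using assms char_nz
    by (auto simp: char_eq_iff[OF z char_one_in] char_eq_iff[OF assms] field_simps)
  finally show ?thesis .
qed

lemma X_finite: "finite X"
proof -
  have "X \<subseteq> PiE (carrier G) (\<lambda>_. {z. z ^ mm = 1})"
  proof
    fix x assume x: "x \<in> X"
    have "x a ^ mm = 1" if "a \<in> carrier G" for a
      using char_pow[OF x that, of mm] pow_mm[OF that] char_1[OF x] by simp
    then show "x \<in> PiE (carrier G) (\<lambda>_. {z. z ^ mm = 1})"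
      using charD(1)[OF x] by (auto simp: PiE_def)
  qed
  moreover have "finite {z::complex. z ^ mm = 1}"
    using card_roots_unity_eq[OF mm_pos] mm_pos card_ge_0_finite by force
  ultimately show ?thesis using fin by (meson finite_PiE finite_subset)
qed

lemma separation: assumes a: "a \<in> carrier G" "a \<noteq> \<one>" shows "\<exists>\<psi>\<in>X. \<psi> a \<noteq> 1"
proof -
  have H0: "subm {\<one>}" by (simp add: subm_def)
  have c0: "pchar {\<one>} (\<lambda>_. 1)" by (simp add: pchar_def)
  define P where "P k = (0 < k \<and> a [^] k \<in> {\<one>})" for k :: nat
  have "P mm" using pow_mm a mm_pos by (auto simp: P_def)
  define k where "k = (LEAST k. P k)"
  have Pk: "P k" using LeastI[of P, OF \<open>P mm\<close>] k_def by simp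
  have kmin: "\<And>r. 0 < r \<Longrightarrow> r < k \<Longrightarrow> a [^] r \<notin> {\<one>}"
    using not_less_Least[of _ P] k_def P_def by blast
  have "k \<noteq> 1" using Pk a by (auto simp: P_def)
  then have k2: "k \<ge> 2" using Pk by (auto simp: P_def)
  define w where "w = cis (2 * pi / k)"
  have wk: "w ^ k = 1" using k2 by (simp add: w_def DeMoivre)
  have w1: "w \<noteq> 1"
  proof
    assume "w = 1"
    then have "cos (2 * pi / k) = 1" unfolding w_def by (metis cis.sel(1) one_complex.sel(1))
    then have "\<exists>n::int. 2 * pi / real k = real_of_int n * 2 * pi" using cos_one_2pi_int by simp
    then obtain n :: int where "2 * pi / real k = real_of_int n * 2 * pi" by blast
    then have "1 = real_of_int n * real k" using k2 by (simp add: field_simps)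
    then have "1 = n * int k" by (metis of_int_eq_1_iff of_int_mult of_int_of_nat_eq)
    then have "int k dvd 1" by (metis dvdI mult.commute)
    then show False using k2 by simp
  qed
  obtain \<chi>' where c': "subm {h \<otimes> a [^] (j::nat) | h j. h \<in> {\<one>}}"
     "pchar {h \<otimes> a [^] (j::nat) | h j. h \<in> {\<one>}} \<chi>'" "\<chi>' a = w"
    using ext_step[OF H0 c0 a(1) _ _ _ kmin] Pk P_def a wk by auto
  obtain \<psi> where ps: "\<psi> \<in> X" "\<forall>h\<in>{h \<otimes> a [^] (j::nat) | h j. h \<in> {\<one>}}. \<psi> h = \<chi>' h"
    using ext_all[OF c'(1,2)] by blast
  have "a = \<one> \<otimes> a [^] (1::nat)" using a by simp
  then have "a \<in> {h \<otimes> a [^] (j::nat) | h j. h \<in> {\<one>}}" by blast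
  then have "\<psi> a = w" using ps c'(3) by blast
  then show ?thesis using ps(1) w1 by blast
qed

lemma bij_Xmult: "\<psi> \<in> X \<Longrightarrow> bij_betw (\<lambda>x. char_mult G \<psi> x) X X"
proof (rule bij_betw_byWitness[where f'="\<lambda>x. char_mult G (char_inv G \<psi>) x"])
  assume p: "\<psi> \<in> X"
  show "\<forall>x\<in>X. char_mult G (char_inv G \<psi>) (char_mult G \<psi> x) = x"
  proof
    fix x assume x: "x \<in> X"
    show "char_mult G (char_inv G \<psi>) (char_mult G \<psi> x) = x"
      by (rule char_eqI[OF char_mult_in[OF char_inv_in[OF p] char_mult_in[OF p x]] x])
        (simp add: char_nz[OF p])
  qed
  show "\<forall>x\<in>X. char_mult G \<psi> (char_mult G (char_inv G \<psi>) x) = x"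
  proof
    fix x assume x: "x \<in> X"
    show "char_mult G \<psi> (char_mult G (char_inv G \<psi>) x) = x"
      by (rule char_eqI[OF char_mult_in[OF p char_mult_in[OF char_inv_in[OF p] x]] x])
        (simp add: char_nz[OF p])
  qed
  show "(\<lambda>x. char_mult G \<psi> x) ` X \<subseteq> X" using p char_mult_in by auto
  show "(\<lambda>x. char_mult G (char_inv G \<psi>) x) ` X \<subseteq> X" using p char_mult_in char_inv_in by auto
qed

lemma orth2_raw: assumes a: "a \<in> carrier G"
  shows "(\<Sum>x\<in>X. x a) = (if a = \<one> then of_nat (card X) else 0)"
proof (cases "a = \<one>")
  case True then show ?thesis by (simp add: char_1)
next
  case False
  then obtain \<psi> where p: "\<psi> \<in> X" "\<psi> a \<noteq> 1" using separation a by blast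
  have "(\<Sum>x\<in>X. x a) = (\<Sum>x\<in>X. char_mult G \<psi> x a)"
    using sum.reindex_bij_betw[OF bij_Xmult[OF p(1)], of "\<lambda>x. x a"] by simp
  also have "\<dots> = \<psi> a * (\<Sum>x\<in>X. x a)" using a by (simp add: sum_distrib_left)
  finally have "(1 - \<psi> a) * (\<Sum>x\<in>X. x a) = 0" by (simp add: algebra_simps)
  then show ?thesis using p False by simp
qed

lemma card_X: "card X = mm"
proof -
  have "(\<Sum>a\<in>carrier G. \<Sum>x\<in>X. x a) = (\<Sum>a\<in>carrier G. if a = \<one> then of_nat (card X) else (0::complex))"
    using orth2_raw by simp
  also have "\<dots> = of_nat (card X)" using fin by (simp add: sum.delta)
  finally have 1: "(\<Sum>a\<in>carrier G. \<Sum>x\<in>X. x a) = of_nat (card X)" .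
  have "(\<Sum>x\<in>X. \<Sum>a\<in>carrier G. x a) = (\<Sum>x\<in>X. if x = char_one G then of_nat mm else (0::complex))"
    using orth1 by simp
  also have "\<dots> = of_nat mm" using X_finite char_one_in by (simp add: sum.delta)
  finally have "(\<Sum>x\<in>X. \<Sum>a\<in>carrier G. x a) = of_nat mm" .
  moreover have "(\<Sum>a\<in>carrier G. \<Sum>x\<in>X. x a) = (\<Sum>x\<in>X. \<Sum>a\<in>carrier G. x a)"
    by (rule sum.swap)
  ultimately have "(of_nat (card X) :: complex) = of_nat mm" using 1 by simp
  then show ?thesis by simp
qed

lemma orth2: assumes a: "a \<in> carrier G"
  shows "(\<Sum>x\<in>X. x a) = (if a = \<one> then of_nat mm else 0)"
  using orth2_raw[OF a] card_X by simp

lemma orth2': assumes "a \<in> carrier G" "b \<in> carrier G"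
  shows "(\<Sum>x\<in>X. x a * inverse (x b)) = (if a = b then of_nat mm else 0)"
proof -
  have "(\<Sum>x\<in>X. x a * inverse (x b)) = (\<Sum>x\<in>X. x (a \<otimes> inv b))"
    using assms by (intro sum.cong) (auto simp: charD(3) char_inv_val)
  also have "\<dots> = (if a \<otimes> inv b = \<one> then of_nat mm else 0)" using assms by (simp add: orth2)
  also have "(a \<otimes> inv b = \<one>) \<longleftrightarrow> a = b"
  proof
    assume "a \<otimes> inv b = \<one>"
    then have "a \<otimes> inv b \<otimes> b = b" using assms by simp
    then show "a = b" using assms by (simp add: m_assoc)
  next
    assume "a = b" then show "a \<otimes> inv b = \<one>" using assms by simp
  qed
  finally show ?thesis .
qed

end



lemma sum_swap22:
  "(\<Sum>x\<in>A. \<Sum>y\<in>B. \<Sum>a\<in>C. \<Sum>b\<in>D. f x y a b) = (\<Sum>a\<in>C. \<Sum>b\<in>D. \<Sum>x\<in>A. \<Sum>y\<in>B. f x y a b)"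
proof -
  have "(\<Sum>x\<in>A. \<Sum>y\<in>B. \<Sum>a\<in>C. \<Sum>b\<in>D. f x y a b) = (\<Sum>x\<in>A. \<Sum>a\<in>C. \<Sum>y\<in>B. \<Sum>b\<in>D. f x y a b)"
    by (rule sum.cong[OF refl], rule sum.swap)
  also have "\<dots> = (\<Sum>x\<in>A. \<Sum>a\<in>C. \<Sum>b\<in>D. \<Sum>y\<in>B. f x y a b)"
    by (rule sum.cong[OF refl], rule sum.cong[OF refl], rule sum.swap)
  also have "\<dots> = (\<Sum>a\<in>C. \<Sum>x\<in>A. \<Sum>b\<in>D. \<Sum>y\<in>B. f x y a b)"
    by (rule sum.swap)
  also have "\<dots> = (\<Sum>a\<in>C. \<Sum>b\<in>D. \<Sum>x\<in>A. \<Sum>y\<in>B. f x y a b)"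
    by (rule sum.cong[OF refl], rule sum.swap)
  finally show ?thesis .
qed

lemma sum_swap14:
  "(\<Sum>b\<in>B. \<Sum>x\<in>A1. \<Sum>y\<in>A2. \<Sum>z\<in>A3. \<Sum>w\<in>A4. f b x y z w)
   = (\<Sum>x\<in>A1. \<Sum>y\<in>A2. \<Sum>z\<in>A3. \<Sum>w\<in>A4. \<Sum>b\<in>B. f b x y z w)"
proof -
  have "(\<Sum>b\<in>B. \<Sum>x\<in>A1. \<Sum>y\<in>A2. \<Sum>z\<in>A3. \<Sum>w\<in>A4. f b x y z w)
     = (\<Sum>x\<in>A1. \<Sum>b\<in>B. \<Sum>y\<in>A2. \<Sum>z\<in>A3. \<Sum>w\<in>A4. f b x y z w)" by (rule sum.swap)
  also have "\<dots> = (\<Sum>x\<in>A1. \<Sum>y\<in>A2. \<Sum>b\<in>B. \<Sum>z\<in>A3. \<Sum>w\<in>A4. f b x y z w)"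
    by (rule sum.cong[OF refl], rule sum.swap)
  also have "\<dots> = (\<Sum>x\<in>A1. \<Sum>y\<in>A2. \<Sum>z\<in>A3. \<Sum>b\<in>B. \<Sum>w\<in>A4. f b x y z w)"
    by (rule sum.cong[OF refl], rule sum.cong[OF refl], rule sum.swap)
  also have "\<dots> = (\<Sum>x\<in>A1. \<Sum>y\<in>A2. \<Sum>z\<in>A3. \<Sum>w\<in>A4. \<Sum>b\<in>B. f b x y z w)"
    by (rule sum.cong[OF refl], rule sum.cong[OF refl], rule sum.cong[OF refl], rule sum.swap)
  finally show ?thesis .
qed

lemma prod22:
  fixes f g :: "_ \<Rightarrow> _ \<Rightarrow> 'c::comm_ring_1"
  shows "(\<Sum>x\<in>A. \<Sum>y\<in>B. f x y) * (\<Sum>z\<in>C. \<Sum>w\<in>D. g z w) = (\<Sum>x\<in>A. \<Sum>y\<in>B. \<Sum>z\<in>C. \<Sum>w\<in>D. f x y * g z w)"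
  unfolding sum_distrib_right unfolding sum_distrib_left ..

lemma sd1:
  fixes c :: "'c::comm_ring_1"
  shows "(c * (\<Sum>a\<in>A. \<Sum>b\<in>B. T a b)) * u * v = (\<Sum>a\<in>A. \<Sum>b\<in>B. c * (T a b * u * v))"
  by (simp add: sum_distrib_left sum_distrib_right mult.assoc)

lemma sd2:
  fixes c :: "'c::comm_ring_1"
  shows "(\<Sum>x\<in>A. \<Sum>y\<in>B. c * (F * P x * Q y)) = c * F * (\<Sum>x\<in>A. P x) * (\<Sum>y\<in>B. Q y)"
proof -
  have sd2a: "(\<Sum>x\<in>A. (c*F*P x) * S) = c*F*(\<Sum>x\<in>A. P x) * S" for S
    by (simp add: sum_distrib_left sum_distrib_right mult.assoc)
  have "(\<Sum>x\<in>A. \<Sum>y\<in>B. c * (F * P x * Q y)) = (\<Sum>x\<in>A. (c*F*P x) * (\<Sum>y\<in>B. Q y))"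
    by (simp add: sum_distrib_left mult.assoc)
  then show ?thesis using sd2a by simp
qed

lemma sumdelta2:
  fixes g :: "_ \<Rightarrow> _ \<Rightarrow> 'c::comm_ring_1"
  assumes "finite A" "finite B" "a \<in> A" "b \<in> B"
  shows "(\<Sum>a'\<in>A. \<Sum>b'\<in>B. g a' b' * (if a = a' then k else 0) * (if b = b' then k else 0)) = g a b * k * k"
proof -
  have "(\<Sum>a'\<in>A. \<Sum>b'\<in>B. g a' b' * (if a = a' then k else 0) * (if b = b' then k else 0))
      = (\<Sum>a'\<in>A. if a' = a then (\<Sum>b'\<in>B. if b' = b then g a' b' * k * k else 0) else 0)"
    by (auto intro!: sum.cong)
  also have "\<dots> = g a b * k * k" using assms by (simp add: sum.delta)
  finally show ?thesis .
qed

lemma sd3: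
  fixes q :: "'c::comm_ring_1"
  shows "(\<Sum>x\<in>A. c x * p x) * q = (\<Sum>x\<in>A. c x * (p x * q))"
  by (simp add: sum_distrib_right mult.assoc)

lemma sd4:
  fixes c :: "_ \<Rightarrow> _ \<Rightarrow> _ \<Rightarrow> _ \<Rightarrow> 'c::comm_ring_1"
  shows "(\<Sum>x\<in>A. \<Sum>y\<in>B. \<Sum>z\<in>C. \<Sum>w\<in>D. c x y z w * (p x * q y * r z * s w))
     = (\<Sum>x\<in>A. (\<Sum>y\<in>B. (\<Sum>z\<in>C. (\<Sum>w\<in>D. c x y z w * s w) * r z) * q y) * p x)"
  by (simp add: sum_distrib_left sum_distrib_right mult_ac)

context fag begin

definition coef :: "('a \<Rightarrow> 'a \<Rightarrow> complex) \<Rightarrow> ('a \<Rightarrow> complex) \<Rightarrow> ('a \<Rightarrow> complex) \<Rightarrow> complex" where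
  "coef F x y = (1 / of_nat mm) * (\<Sum>a\<in>carrier G. \<Sum>b\<in>carrier G. F a b * inverse (x a) * inverse (y b))"

lemma expand:
  assumes a: "a \<in> carrier G" and b: "b \<in> carrier G"
  shows "F a b = (1 / of_nat mm) * (\<Sum>x\<in>X. \<Sum>y\<in>X. coef F x y * x a * y b)"
proof -
  have "(\<Sum>x\<in>X. \<Sum>y\<in>X. coef F x y * x a * y b)
      = (\<Sum>x\<in>X. \<Sum>y\<in>X. \<Sum>a'\<in>carrier G. \<Sum>b'\<in>carrier G.
           (1 / of_nat mm) * (F a' b' * (x a * inverse (x a')) * (y b * inverse (y b'))))"
    unfolding coef_def sd1 by (intro sum.cong refl) (simp only: mult_ac)
  also have "\<dots> = (\<Sum>a'\<in>carrier G. \<Sum>b'\<in>carrier G. \<Sum>x\<in>X. \<Sum>y\<in>X.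
           (1 / of_nat mm) * (F a' b' * (x a * inverse (x a')) * (y b * inverse (y b'))))"
    by (rule sum_swap22)
  also have "\<dots> = (\<Sum>a'\<in>carrier G. \<Sum>b'\<in>carrier G.
           (1 / of_nat mm) * F a' b' * (\<Sum>x\<in>X. x a * inverse (x a')) * (\<Sum>y\<in>X. y b * inverse (y b')))"
    by (simp only: sd2)
  also have "\<dots> = (\<Sum>a'\<in>carrier G. \<Sum>b'\<in>carrier G.
           (1 / of_nat mm) * F a' b' * (if a = a' then of_nat mm else 0) * (if b = b' then of_nat mm else 0))"
    using a b by (intro sum.cong refl) (simp add: orth2')
  also have "\<dots> = (1 / of_nat mm) * F a b * of_nat mm * of_nat mm"
    by (rule sumdelta2[where g="\<lambda>a' b'. 1 / of_nat mm * F a' b'", OF fin fin a b])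
  finally show ?thesis using mm_pos by simp
qed

lemma uniq1:
  assumes h: "\<And>a. a \<in> carrier G \<Longrightarrow> (\<Sum>x\<in>X. c x * x a) = 0" and x0: "x0 \<in> X"
  shows "c x0 = 0"
proof -
  have "0 = (\<Sum>a\<in>carrier G. (\<Sum>x\<in>X. c x * x a) * inverse (x0 a))" using h by simp
  also have "\<dots> = (\<Sum>a\<in>carrier G. \<Sum>x\<in>X. c x * (x a * inverse (x0 a)))"
    by (simp only: sd3)
  also have "\<dots> = (\<Sum>x\<in>X. \<Sum>a\<in>carrier G. c x * (x a * inverse (x0 a)))" by (rule sum.swap)
  also have "\<dots> = (\<Sum>x\<in>X. c x * (if x = x0 then of_nat mm else 0))"
    using x0 by (intro sum.cong refl) (simp add: sum_distrib_left[symmetric] orth1')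
  also have "\<dots> = c x0 * of_nat mm" using x0 X_finite by (simp add: if_distrib sum.delta cong: if_cong)
  finally show ?thesis using mm_pos by simp
qed

lemma uniq4:
  assumes h: "\<And>a1 a2 a3 a4. a1 \<in> carrier G \<Longrightarrow> a2 \<in> carrier G \<Longrightarrow> a3 \<in> carrier G \<Longrightarrow> a4 \<in> carrier G \<Longrightarrow>
     (\<Sum>x\<in>X. \<Sum>y\<in>X. \<Sum>z\<in>X. \<Sum>w\<in>X. c x y z w * (x a1 * y a2 * z a3 * w a4)) = 0"
    and X: "x \<in> X" "y \<in> X" "z \<in> X" "w \<in> X"
  shows "c x y z w = 0"
proof -
  have r: "(\<Sum>x\<in>X. \<Sum>y\<in>X. \<Sum>z\<in>X. \<Sum>w\<in>X. c x y z w * (x a1 * y a2 * z a3 * w a4))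
     = (\<Sum>x\<in>X. (\<Sum>y\<in>X. (\<Sum>z\<in>X. (\<Sum>w\<in>X. c x y z w * w a4) * z a3) * y a2) * x a1)" for a1 a2 a3 a4
    by (rule sd4)
  have 1: "(\<Sum>y\<in>X. (\<Sum>z\<in>X. (\<Sum>w\<in>X. c x y z w * w a4) * z a3) * y a2) = 0"
    if "x \<in> X" "a2 \<in> carrier G" "a3 \<in> carrier G" "a4 \<in> carrier G" for x a2 a3 a4
    using uniq1[of "\<lambda>x. (\<Sum>y\<in>X. (\<Sum>z\<in>X. (\<Sum>w\<in>X. c x y z w * w a4) * z a3) * y a2)" x] h r that
    by simp
  have 2: "(\<Sum>z\<in>X. (\<Sum>w\<in>X. c x y z w * w a4) * z a3) = 0"
    if "x \<in> X" "y \<in> X" "a3 \<in> carrier G" "a4 \<in> carrier G" for x y a3 a4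
    using uniq1[of "\<lambda>y. (\<Sum>z\<in>X. (\<Sum>w\<in>X. c x y z w * w a4) * z a3)" y] 1 that by simp
  have 3: "(\<Sum>w\<in>X. c x y z w * w a4) = 0"
    if "x \<in> X" "y \<in> X" "z \<in> X" "a4 \<in> carrier G" for x y z a4
    using uniq1[of "\<lambda>z. (\<Sum>w\<in>X. c x y z w * w a4)" z] 2 that by simp
  show ?thesis using uniq1[of "\<lambda>w. c x y z w" w] 3 X by simp
qed

end



locale jac = fag G for G (structure) +
  fixes J :: "'a \<Rightarrow> 'a \<Rightarrow> complex"
  assumes jac: "jacobi_function G J"
begin

abbreviation "f \<equiv> coef J"

lemma J_sym: "a \<in> carrier G \<Longrightarrow> b \<in> carrier G \<Longrightarrow> J a b = J b a"
  using jac unfolding jacobi_function_def by blast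

lemma J_C: "a1 \<in> carrier G \<Longrightarrow> a2 \<in> carrier G \<Longrightarrow> a3 \<in> carrier G \<Longrightarrow> a4 \<in> carrier G \<Longrightarrow>
  (\<Sum>b\<in>carrier G. J (a1 \<otimes> b) (a2 \<otimes> inv b) * J (a3 \<otimes> b) (a4 \<otimes> inv b)) = J (a1 \<otimes> a4) (a2 \<otimes> a3)"
  using jac unfolding jacobi_function_def by blast

lemma J_B: "a \<in> carrier G \<Longrightarrow> b \<in> carrier G \<Longrightarrow> c \<in> carrier G \<Longrightarrow>
  jstar G J a b * jstar G J (a \<otimes> b) c = jstar G J a (b \<otimes> c) * jstar G J b c"
  using jac unfolding jacobi_function_def by blast

lemma fsym: "f x y = f y x"
proof -
  have "(\<Sum>a\<in>carrier G. \<Sum>b\<in>carrier G. J a b * inverse (x a) * inverse (y b))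
      = (\<Sum>b\<in>carrier G. \<Sum>a\<in>carrier G. J a b * inverse (x a) * inverse (y b))" by (rule sum.swap)
  also have "\<dots> = (\<Sum>b\<in>carrier G. \<Sum>a\<in>carrier G. J b a * inverse (y b) * inverse (x a))"
    by (intro sum.cong refl) (simp add: J_sym)
  finally show ?thesis unfolding coef_def by simp
qed

lemma Jshift:
  assumes "a1 \<in> carrier G" "a2 \<in> carrier G" "b \<in> carrier G"
  shows "J (a1 \<otimes> b) (a2 \<otimes> inv b) = (1 / of_nat mm) *
     (\<Sum>x\<in>X. \<Sum>y\<in>X. f x y * (x a1 * y a2) * (x b * inverse (y b)))"
proof -
  have "J (a1 \<otimes> b) (a2 \<otimes> inv b) = (1 / of_nat mm) *
     (\<Sum>x\<in>X. \<Sum>y\<in>X. f x y * x (a1 \<otimes> b) * y (a2 \<otimes> inv b))"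
    using assms by (intro expand) auto
  also have "(\<Sum>x\<in>X. \<Sum>y\<in>X. f x y * x (a1 \<otimes> b) * y (a2 \<otimes> inv b))
    = (\<Sum>x\<in>X. \<Sum>y\<in>X. f x y * (x a1 * y a2) * (x b * inverse (y b)))"
    using assms by (intro sum.cong refl) (simp add: charD(3) char_inv_val mult_ac)
  finally show ?thesis .
qed

lemma Ksum:
  assumes "x \<in> X" "y \<in> X" "z \<in> X" "w \<in> X"
  shows "(\<Sum>b\<in>carrier G. (x b * inverse (y b)) * (z b * inverse (w b)))
     = (if char_mult G x z = char_mult G y w then of_nat mm else 0)"
proof -
  have "(\<Sum>b\<in>carrier G. (x b * inverse (y b)) * (z b * inverse (w b)))
     = (\<Sum>b\<in>carrier G. char_mult G x z b * inverse (char_mult G y w b))"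
    by (intro sum.cong refl) (simp add: field_simps)
  also have "\<dots> = (if char_mult G x z = char_mult G y w then of_nat mm else 0)"
    using assms by (intro orth1' char_mult_in)
  finally show ?thesis .
qed

definition "c1 x y z w = (if char_mult G x z = char_mult G y w then f x y * f z w else 0)"
definition "c2 x y z w = (if z = y \<and> w = x then f x y else 0)"

lemma lhsC:
  assumes a: "a1 \<in> carrier G" "a2 \<in> carrier G" "a3 \<in> carrier G" "a4 \<in> carrier G"
  shows "(\<Sum>b\<in>carrier G. J (a1 \<otimes> b) (a2 \<otimes> inv b) * J (a3 \<otimes> b) (a4 \<otimes> inv b))
    = (1 / of_nat mm) * (\<Sum>x\<in>X. \<Sum>y\<in>X. \<Sum>z\<in>X. \<Sum>w\<in>X. c1 x y z w * (x a1 * y a2 * z a3 * w a4))"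
proof -
  define E where "E x y z w = f x y * f z w * (x a1 * y a2 * z a3 * w a4)" for x y z w
  define K where "K x y z w b = (x b * inverse (y b)) * (z b * inverse (w b))" for x y z w :: "'a \<Rightarrow> complex" and b
  have pw: "(f x y * (x a1 * y a2) * (x b * inverse (y b))) * (f z w * (z a3 * w a4) * (z b * inverse (w b)))
     = E x y z w * K x y z w b" for x y z w b
    unfolding E_def K_def by (simp only: mult_ac)
  have inner: "(\<Sum>b\<in>carrier G. E x y z w * K x y z w b) = E x y z w * (if char_mult G x z = char_mult G y w then of_nat mm else 0)"
    if "x \<in> X" "y \<in> X" "z \<in> X" "w \<in> X" for x y z w
    using Ksum[OF that] unfolding K_def by (simp only: sum_distrib_left[symmetric])
  have fin_c1: "(1 / of_nat mm) * (E x y z w * (if char_mult G x z = char_mult G y w then of_nat mm else 0))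
      = c1 x y z w * (x a1 * y a2 * z a3 * w a4)" for x y z w
    using mm_pos by (simp add: c1_def E_def)
  have "(\<Sum>b\<in>carrier G. J (a1 \<otimes> b) (a2 \<otimes> inv b) * J (a3 \<otimes> b) (a4 \<otimes> inv b))
     = (\<Sum>b\<in>carrier G. (1 / of_nat mm) * ((1 / of_nat mm) *
          (\<Sum>x\<in>X. \<Sum>y\<in>X. \<Sum>z\<in>X. \<Sum>w\<in>X. E x y z w * K x y z w b)))"
  proof (intro sum.cong refl)
    fix b assume b: "b \<in> carrier G"
    have "J (a1 \<otimes> b) (a2 \<otimes> inv b) * J (a3 \<otimes> b) (a4 \<otimes> inv b)
       = (1 / of_nat mm) * ((1 / of_nat mm) * ((\<Sum>x\<in>X. \<Sum>y\<in>X. f x y * (x a1 * y a2) * (x b * inverse (y b)))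
          * (\<Sum>z\<in>X. \<Sum>w\<in>X. f z w * (z a3 * w a4) * (z b * inverse (w b)))))"
      using Jshift a b by simp
    also have "\<dots> = (1 / of_nat mm) * ((1 / of_nat mm) *
          (\<Sum>x\<in>X. \<Sum>y\<in>X. \<Sum>z\<in>X. \<Sum>w\<in>X. E x y z w * K x y z w b))"
      by (simp only: prod22 pw)
    finally show "J (a1 \<otimes> b) (a2 \<otimes> inv b) * J (a3 \<otimes> b) (a4 \<otimes> inv b)
       = (1 / of_nat mm) * ((1 / of_nat mm) *
          (\<Sum>x\<in>X. \<Sum>y\<in>X. \<Sum>z\<in>X. \<Sum>w\<in>X. E x y z w * K x y z w b))" .
  qed
  also have "\<dots> = (1 / of_nat mm) * ((1 / of_nat mm) *
          (\<Sum>b\<in>carrier G. \<Sum>x\<in>X. \<Sum>y\<in>X. \<Sum>z\<in>X. \<Sum>w\<in>X. E x y z w * K x y z w b))"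
    by (simp only: sum_distrib_left[symmetric])
  also have "\<dots> = (1 / of_nat mm) * ((1 / of_nat mm) *
          (\<Sum>x\<in>X. \<Sum>y\<in>X. \<Sum>z\<in>X. \<Sum>w\<in>X. \<Sum>b\<in>carrier G. E x y z w * K x y z w b))"
    by (rule arg_cong[where f="\<lambda>S. (1 / of_nat mm) * ((1 / of_nat mm) * S)"], rule sum_swap14)
  also have "\<dots> = (1 / of_nat mm) * ((1 / of_nat mm) *
          (\<Sum>x\<in>X. \<Sum>y\<in>X. \<Sum>z\<in>X. \<Sum>w\<in>X. E x y z w * (if char_mult G x z = char_mult G y w then of_nat mm else 0)))"
    by (rule arg_cong[where f="\<lambda>S. (1 / of_nat mm) * ((1 / of_nat mm) * S)"], intro sum.cong refl, rule inner)
  also have "\<dots> = (1 / of_nat mm) * (\<Sum>x\<in>X. \<Sum>y\<in>X. \<Sum>z\<in>X. \<Sum>w\<in>X. (1 / of_nat mm) *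
           (E x y z w * (if char_mult G x z = char_mult G y w then of_nat mm else 0)))"
    by (simp only: sum_distrib_left[symmetric])
  also have "\<dots> = (1 / of_nat mm) * (\<Sum>x\<in>X. \<Sum>y\<in>X. \<Sum>z\<in>X. \<Sum>w\<in>X. c1 x y z w * (x a1 * y a2 * z a3 * w a4))"
    by (simp only: fin_c1)
  finally show ?thesis .
qed

lemma rhsC:
  assumes a: "a1 \<in> carrier G" "a2 \<in> carrier G" "a3 \<in> carrier G" "a4 \<in> carrier G"
  shows "J (a1 \<otimes> a4) (a2 \<otimes> a3)
    = (1 / of_nat mm) * (\<Sum>x\<in>X. \<Sum>y\<in>X. \<Sum>z\<in>X. \<Sum>w\<in>X. c2 x y z w * (x a1 * y a2 * z a3 * w a4))"
proof -
  have pt: "f x y * x (a1 \<otimes> a4) * y (a2 \<otimes> a3) = (\<Sum>z\<in>X. \<Sum>w\<in>X. c2 x y z w * (x a1 * y a2 * z a3 * w a4))"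
    if xy: "x \<in> X" "y \<in> X" for x y
  proof -
    have "(\<Sum>z\<in>X. \<Sum>w\<in>X. c2 x y z w * (x a1 * y a2 * z a3 * w a4))
       = (\<Sum>z\<in>X. if z = y then (\<Sum>w\<in>X. if w = x then f x y * (x a1 * y a2 * z a3 * w a4) else 0) else 0)"
      by (auto simp: c2_def intro!: sum.cong)
    also have "\<dots> = f x y * (x a1 * y a2 * y a3 * x a4)" using xy X_finite by (simp add: sum.delta)
    also have "\<dots> = f x y * x (a1 \<otimes> a4) * y (a2 \<otimes> a3)" using xy a by (simp add: charD(3) mult_ac)
    finally show ?thesis by simp
  qed
  have "J (a1 \<otimes> a4) (a2 \<otimes> a3) = (1 / of_nat mm) * (\<Sum>x\<in>X. \<Sum>y\<in>X. f x y * x (a1 \<otimes> a4) * y (a2 \<otimes> a3))"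
    using a by (intro expand) auto
  also have "\<dots> = (1 / of_nat mm) * (\<Sum>x\<in>X. \<Sum>y\<in>X. \<Sum>z\<in>X. \<Sum>w\<in>X. c2 x y z w * (x a1 * y a2 * z a3 * w a4))"
    by (rule arg_cong[where f="\<lambda>S. (1 / of_nat mm) * S"], intro sum.cong refl, rule pt)
  finally show ?thesis .
qed

lemma c12: assumes "x \<in> X" "y \<in> X" "z \<in> X" "w \<in> X" shows "c1 x y z w = c2 x y z w"
proof -
  have "(\<Sum>x\<in>X. \<Sum>y\<in>X. \<Sum>z\<in>X. \<Sum>w\<in>X. (c1 x y z w - c2 x y z w) * (x a1 * y a2 * z a3 * w a4)) = 0"
    if a: "a1 \<in> carrier G" "a2 \<in> carrier G" "a3 \<in> carrier G" "a4 \<in> carrier G" for a1 a2 a3 a4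
  proof -
    have "(1 / of_nat mm) * (\<Sum>x\<in>X. \<Sum>y\<in>X. \<Sum>z\<in>X. \<Sum>w\<in>X. c1 x y z w * (x a1 * y a2 * z a3 * w a4))
      = (1 / of_nat mm) * (\<Sum>x\<in>X. \<Sum>y\<in>X. \<Sum>z\<in>X. \<Sum>w\<in>X. c2 x y z w * (x a1 * y a2 * z a3 * w a4))"
      using lhsC[OF a] rhsC[OF a] J_C[OF a] by metis
    then have "(\<Sum>x\<in>X. \<Sum>y\<in>X. \<Sum>z\<in>X. \<Sum>w\<in>X. c1 x y z w * (x a1 * y a2 * z a3 * w a4))
      = (\<Sum>x\<in>X. \<Sum>y\<in>X. \<Sum>z\<in>X. \<Sum>w\<in>X. c2 x y z w * (x a1 * y a2 * z a3 * w a4))"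
      using mm_pos by simp
    then show ?thesis by (simp add: left_diff_distrib sum_subtractf)
  qed
  then show ?thesis using uniq4[of "\<lambda>x y z w. c1 x y z w - c2 x y z w"] assms by simp
qed

lemma f01: assumes "x \<in> X" "y \<in> X" shows "f x y = 0 \<or> f x y = 1"
proof -
  have "char_mult G x y = char_mult G y x"
    using assms by (intro char_eqI char_mult_in) (auto simp: mult.commute)
  then have "f x y * f y x = f x y" using c12[of x y y x] assms by (simp add: c1_def c2_def)
  then have "f x y * f x y = f x y" using fsym by metis
  then show ?thesis by (metis mult_cancel_right1 mult_zero_left)
qed

lemma funiq:
  assumes X: "x \<in> X" "y \<in> X" "x' \<in> X" "y' \<in> X" and f: "f x y = 1" "f x' y' = 1"
    and r: "char_mult G x (char_inv G y) = char_mult G x' (char_inv G y')"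
  shows "x = x' \<and> y = y'"
proof -
  have "x a * inverse (y a) = x' a * inverse (y' a)" if "a \<in> carrier G" for a
    using fun_cong[OF r, of a] that by simp
  then have "x a * y' a = y a * x' a" if "a \<in> carrier G" for a
    using that X char_nz by (simp add: field_simps)
  then have "char_mult G x y' = char_mult G y x'"
    using X by (intro char_eqI char_mult_in) auto
  then have "f x y * f y' x' = (if y' = y \<and> x' = x then f x y else 0)"
    using c12[of x y y' x'] X by (simp add: c1_def c2_def)
  moreover have "f y' x' = 1" using f fsym by metis
  ultimately show ?thesis using f by (auto split: if_splits)
qed

end



context jac begin

definition "PP = {p \<in> X \<times> X. f (fst p) (snd p) = 1}"
definition "rat p = char_mult G (fst p) (char_inv G (snd p))"
definition "SS = rat ` PP"
definition "ii r = fst (SOME p. p \<in> PP \<and> rat p = r)"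
definition "ii' r = char_mult G (ii r) (char_inv G r)"

lemma PP_sub: "PP \<subseteq> X \<times> X" by (auto simp: PP_def)

lemma rat_in: "p \<in> X \<times> X \<Longrightarrow> rat p \<in> X"
  by (auto simp: rat_def intro!: char_mult_in char_inv_in)

lemma SS_sub: "SS \<subseteq> X" using rat_in PP_sub by (auto simp: SS_def)

lemma ratio_id: "u \<in> X \<Longrightarrow> v \<in> X \<Longrightarrow> char_mult G u (char_inv G (char_mult G u (char_inv G v))) = v"
  by (rule char_eqI) (auto intro!: char_mult_in char_inv_in simp: char_nz field_simps)

lemma iP: assumes r: "r \<in> SS"
  shows "(ii r, ii' r) \<in> PP" "\<And>p. p \<in> PP \<Longrightarrow> rat p = r \<Longrightarrow> p = (ii r, ii' r)"
proof -
  define p where "p = (SOME p. p \<in> PP \<and> rat p = r)"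
  have "\<exists>p. p \<in> PP \<and> rat p = r" using r by (auto simp: SS_def)
  then have p: "p \<in> PP" "rat p = r" unfolding p_def by (metis (mono_tags, lifting) someI_ex)+
  have pX: "fst p \<in> X" "snd p \<in> X" using p PP_sub by auto
  have "snd p = ii' r"
    unfolding ii'_def ii_def p_def[symmetric] using p(2) ratio_id[OF pX] by (simp add: rat_def)
  then have pe: "p = (ii r, ii' r)" unfolding ii_def p_def[symmetric] by (simp add: prod_eq_iff)
  then show "(ii r, ii' r) \<in> PP" using p by simp
  fix q assume q: "q \<in> PP" "rat q = r"
  have "fst q = fst p \<and> snd q = snd p"
    using funiq[of "fst q" "snd q" "fst p" "snd p"] q p PP_sub by (auto simp: PP_def rat_def)
  then show "q = (ii r, ii' r)" using pe by (simp add: prod_eq_iff)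
qed

lemma ii_in: "r \<in> SS \<Longrightarrow> ii r \<in> X" using iP(1) PP_sub by blast
lemma ii'_in: "r \<in> SS \<Longrightarrow> ii' r \<in> X" using iP(1) PP_sub by blast

lemma rat_ii: "r \<in> SS \<Longrightarrow> rat (ii r, ii' r) = r"
proof -
  assume r: "r \<in> SS"
  then obtain p where p: "p \<in> PP" "rat p = r" by (auto simp: SS_def)
  then show ?thesis using iP(2)[OF r p] by simp
qed

lemma bij_SP: "bij_betw (\<lambda>r. (ii r, ii' r)) SS PP"
  unfolding bij_betw_def
proof
  show "inj_on (\<lambda>r. (ii r, ii' r)) SS"
    by (intro inj_onI) (metis rat_ii)
  show "(\<lambda>r. (ii r, ii' r)) ` SS = PP"
  proof
    show "(\<lambda>r. (ii r, ii' r)) ` SS \<subseteq> PP" using iP(1) by auto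
    show "PP \<subseteq> (\<lambda>r. (ii r, ii' r)) ` SS"
    proof
      fix p assume p: "p \<in> PP"
      then have "rat p \<in> SS" by (simp add: SS_def)
      then show "p \<in> (\<lambda>r. (ii r, ii' r)) ` SS" using iP(2)[OF _ p refl] by blast
    qed
  qed
qed

lemma SS_finite: "finite SS" using SS_sub X_finite finite_subset by blast

lemma J_repr: assumes a: "a \<in> carrier G" and b: "b \<in> carrier G"
  shows "J a b = (1 / of_nat mm) * (\<Sum>r\<in>SS. ii r a * ii' r b)"
proof -
  have "(\<Sum>x\<in>X. \<Sum>y\<in>X. f x y * x a * y b) = (\<Sum>p\<in>X \<times> X. f (fst p) (snd p) * fst p a * snd p b)"
    by (simp add: sum.cartesian_product split_beta)
  also have "\<dots> = (\<Sum>p\<in>X \<times> X. if f (fst p) (snd p) = 1 then fst p a * snd p b else 0)"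
    by (intro sum.cong refl) (use f01 in fastforce)
  also have "\<dots> = (\<Sum>p\<in>PP. fst p a * snd p b)"
    unfolding PP_def using X_finite by (simp add: sum.inter_filter)
  also have "\<dots> = (\<Sum>r\<in>SS. ii r a * ii' r b)"
    using sum.reindex_bij_betw[OF bij_SP, of "\<lambda>p. fst p a * snd p b"] by simp
  finally show ?thesis using expand[OF a b, of J] by simp
qed

lemma SS_inv: assumes r: "r \<in> SS"
  shows "char_inv G r \<in> SS" "ii (char_inv G r) = ii' r" "ii r = char_mult G r (ii (char_inv G r))"
proof -
  have rX: "r \<in> X" using r SS_sub by blast
  have q: "(ii' r, ii r) \<in> PP" using iP(1)[OF r] fsym by (auto simp: PP_def)
  have "rat (ii' r, ii r) = char_inv G r"
    using ii_in[OF r] rX char_nz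
    by (intro char_eqI) (auto intro!: char_mult_in char_inv_in ii'_in[OF r] simp: rat_def ii'_def field_simps)
  then show ci: "char_inv G r \<in> SS" using q by (metis SS_def image_eqI)
  show e: "ii (char_inv G r) = ii' r" using iP(2)[OF ci q] \<open>rat (ii' r, ii r) = char_inv G r\<close> by simp
  show "ii r = char_mult G r (ii (char_inv G r))"
    unfolding e using ii_in[OF r] rX char_nz
    by (intro char_eqI) (auto intro!: char_mult_in char_inv_in ii'_in[OF r] simp: ii'_def field_simps)
qed

end



lemma norm1_Re1: fixes z :: complex assumes "cmod z = 1" "Re z = 1" shows "z = 1"
proof -
  have "(cmod z)^2 = (Re z)^2 + (Im z)^2" by (rule cmod_power2)
  then have "Im z = 0" using assms by simp
  then show ?thesis using assms by (simp add: complex_eq_iff)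
qed

context jac begin

definition "TT g = (\<Sum>r\<in>SS. ii r g)"

lemma card_SS: "card SS \<le> mm" using card_mono[OF X_finite SS_sub] card_X by simp

lemma J_g1: "g \<in> carrier G \<Longrightarrow> J g \<one> = TT g / of_nat mm"
  using J_repr[of g \<one>] ii'_in by (simp add: TT_def char_1)

lemma TT1: "TT \<one> = of_nat (card SS)"
  using ii_in by (simp add: TT_def char_1)

lemma TT_cases: assumes g: "g \<in> carrier G" "g \<noteq> \<one>"
  shows "TT g = of_nat mm \<or> TT g = of_nat (card SS) - of_nat mm"
proof -
  have B: "jstar G J \<one> \<one> * jstar G J (\<one> \<otimes> \<one>) g = jstar G J \<one> (\<one> \<otimes> g) * jstar G J \<one> g"
    using J_B[of \<one> \<one> g] g by simp
  define A where "A = J \<one> \<one>"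
  define Bv where "Bv = J \<one> g"
  have "(A - 2) * (Bv - 1) = (Bv - 1) * (Bv - 1)"
    using B g by (simp add: jstar_def kdelta_def A_def Bv_def)
  then have "(Bv - 1) * (A - 1 - Bv) = 0" by (simp add: algebra_simps)
  then have "Bv = 1 \<or> Bv = A - 1" by auto
  moreover have "Bv = TT g / of_nat mm" using J_g1 g J_sym by (simp add: Bv_def)
  moreover have "A = of_nat (card SS) / of_nat mm" using J_g1[of \<one>] TT1 by (simp add: A_def)
  ultimately show ?thesis using mm_pos by (auto simp: field_simps)
qed

lemma TT_ne: assumes g: "g \<in> carrier G" "g \<noteq> \<one>" shows "TT g \<noteq> of_nat mm"
proof
  assume T: "TT g = of_nat mm"
  have le1: "Re (ii r g) \<le> 1" if "r \<in> SS" for r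
  proof -
    have "Re (ii r g) \<le> cmod (ii r g)" by (rule complex_Re_le_cmod)
    then show ?thesis using charD(2)[OF ii_in[OF that] g(1)] by simp
  qed
  have "Re (TT g) = (\<Sum>r\<in>SS. Re (ii r g))" by (simp add: TT_def)
  also have "\<dots> \<le> (\<Sum>r\<in>SS. 1)" using le1 by (intro sum_mono) auto
  finally have "real mm \<le> real (card SS)" using T by simp
  then have s: "card SS = mm" using card_SS by simp
  have "(\<Sum>r\<in>SS. 1 - Re (ii r g)) = 0"
    using T s \<open>Re (TT g) = (\<Sum>r\<in>SS. Re (ii r g))\<close> by (simp add: sum_subtractf)
  then have "\<forall>r\<in>SS. 1 - Re (ii r g) = 0"
    using sum_nonneg_eq_0_iff[OF SS_finite, of "\<lambda>r. 1 - Re (ii r g)"] le1 by simp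
  then have i1: "ii r g = 1" if "r \<in> SS" for r
    using that norm1_Re1 charD(2)[OF ii_in[OF that] g(1)] by simp
  have SX: "SS = X" using card_subset_eq[OF X_finite SS_sub] s card_X by simp
  have "r g = 1" if r: "r \<in> X" for r
  proof -
    have rS: "r \<in> SS" using r SX by simp
    have "ii r g = r g * ii (char_inv G r) g"
      using fun_cong[OF SS_inv(3)[OF rS], of g] g by simp
    then show ?thesis using i1[OF rS] i1[OF SS_inv(1)[OF rS]] by simp
  qed
  then have "(\<Sum>r\<in>X. r g) = (\<Sum>r\<in>X. 1)" by (intro sum.cong) auto
  then have "(\<Sum>r\<in>X. r g) = of_nat mm" using card_X by simp
  then show False using orth2[OF g(1)] g mm_pos by simp
qed

lemma fiber: assumes u: "u \<in> X"
  shows "of_nat (card {r\<in>SS. ii r = u}) = (if u = char_one G then of_nat (card SS) - of_nat mm else 0) + (1::complex)"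
proof -
  have "(\<Sum>g\<in>carrier G. TT g * inverse (u g)) = (\<Sum>g\<in>carrier G. \<Sum>r\<in>SS. ii r g * inverse (u g))"
    by (simp add: TT_def sum_distrib_right)
  also have "\<dots> = (\<Sum>r\<in>SS. \<Sum>g\<in>carrier G. ii r g * inverse (u g))" by (rule sum.swap)
  also have "\<dots> = (\<Sum>r\<in>SS. if ii r = u then of_nat mm else 0)"
    using u by (intro sum.cong refl) (simp add: orth1' ii_in)
  also have "\<dots> = of_nat mm * of_nat (card {r\<in>SS. ii r = u})"
    using SS_finite by (simp add: sum.inter_filter[symmetric])
  finally have L: "(\<Sum>g\<in>carrier G. TT g * inverse (u g)) = of_nat mm * of_nat (card {r\<in>SS. ii r = u})" .
  define s where "s = (of_nat (card SS) - of_nat mm :: complex)"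
  have "TT g = s + (if g = \<one> then of_nat mm else 0)" if "g \<in> carrier G" for g
    using TT_cases[OF that] TT_ne[OF that] TT1 by (cases "g = \<one>") (auto simp: s_def)
  then have "(\<Sum>g\<in>carrier G. TT g * inverse (u g))
      = (\<Sum>g\<in>carrier G. s * inverse (u g) + (if g = \<one> then of_nat mm * inverse (u g) else 0))"
    by (intro sum.cong refl) (simp add: distrib_right)
  also have "\<dots> = s * (\<Sum>g\<in>carrier G. 1 * inverse (u g)) + of_nat mm"
    using fin u by (simp add: sum.distrib sum_distrib_left[symmetric] sum.delta char_1)
  also have "(\<Sum>g\<in>carrier G. 1 * inverse (u g)) = (\<Sum>g\<in>carrier G. char_one G g * inverse (u g))"
    by simp
  also have "\<dots> = (if char_one G = u then of_nat mm else 0)" using orth1'[OF char_one_in u] .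
  finally have R: "(\<Sum>g\<in>carrier G. TT g * inverse (u g)) = s * (if char_one G = u then of_nat mm else 0) + of_nat mm" .
  from L R have "of_nat mm * of_nat (card {r\<in>SS. ii r = u}) = of_nat mm * ((if u = char_one G then s else 0) + 1)"
    by (auto simp: algebra_simps)
  then show ?thesis using mm_pos by (simp add: s_def)
qed

end



lemma bij_from_fibers:
  assumes "finite A" "\<And>r. r \<in> A \<Longrightarrow> h r \<in> B" "\<And>u. u \<in> B \<Longrightarrow> card {r\<in>A. h r = u} = 1"
  shows "bij_betw h A B"
  unfolding bij_betw_def
proof
  show "inj_on h A"
  proof (rule inj_onI)
    fix r1 r2 assume r: "r1 \<in> A" "r2 \<in> A" "h r1 = h r2"
    have "card {r\<in>A. h r = h r1} = 1" using assms r by blast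
    then obtain z where z: "{r\<in>A. h r = h r1} = {z}" by (rule card_1_singletonE)
    have "r1 \<in> {r\<in>A. h r = h r1}" "r2 \<in> {r\<in>A. h r = h r1}" using r by auto
    then show "r1 = r2" unfolding z by simp
  qed
  show "h ` A = B"
  proof
    show "h ` A \<subseteq> B" using assms by auto
    show "B \<subseteq> h ` A"
    proof
      fix u assume "u \<in> B"
      then have "card {r\<in>A. h r = u} = 1" using assms by blast
      then obtain z where z: "{r\<in>A. h r = u} = {z}" by (rule card_1_singletonE)
      have "z \<in> {r\<in>A. h r = u}" unfolding z by simp
      then show "u \<in> h ` A" by auto
    qed
  qed
qed

context jac begin

lemma fib_ne1: "u \<in> X \<Longrightarrow> u \<noteq> char_one G \<Longrightarrow> card {r\<in>SS. ii r = u} = 1"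
  using fiber[of u] by simp

lemma fib_1: "card {r\<in>SS. ii r = char_one G} + mm = card SS + 1"
proof -
  have "(of_nat (card {r\<in>SS. ii r = char_one G}) :: complex) = of_nat (card SS) - of_nat mm + 1"
    using fiber[OF char_one_in] by simp
  then have "(of_nat (card {r\<in>SS. ii r = char_one G} + mm) :: complex) = of_nat (card SS + 1)"
    by (simp add: algebra_simps)
  then show ?thesis by (simp only: of_nat_eq_iff)
qed

lemma cinv_cinv: "x \<in> X \<Longrightarrow> char_inv G (char_inv G x) = x"
  by (rule char_eqI) (auto intro!: char_inv_in)

lemma main:
  shows "\<exists>S i. S \<subseteq> characters G
     \<and> (\<forall>x\<in>S. i x \<in> characters G)
     \<and> (\<forall>a\<in>carrier G. \<forall>b\<in>carrier G.
          J a b = (1 / of_nat (card (carrier G))) *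
                  (\<Sum>x\<in>S. i x a * char_mult G (i x) (char_inv G x) b))
     \<and> (\<forall>x\<in>S. char_inv G x \<in> S)
     \<and> (\<forall>x\<in>S. i x = char_mult G x (i (char_inv G x)))
     \<and> ((\<exists>c\<in>characters G. char_mult G c c = char_one G
            \<and> S = characters G - {c}
            \<and> bij_betw i (characters G - {c}) (characters G - {char_one G}))
        \<or> (S = characters G \<and> bij_betw i (characters G) (characters G)))"
proof (intro exI conjI)
  show "SS \<subseteq> X" by (rule SS_sub)
  show "\<forall>x\<in>SS. ii x \<in> X" using ii_in by blast
  show "\<forall>a\<in>carrier G. \<forall>b\<in>carrier G.
          J a b = (1 / of_nat mm) * (\<Sum>x\<in>SS. ii x a * char_mult G (ii x) (char_inv G x) b)"
    using J_repr by (simp add: ii'_def)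
  show "\<forall>x\<in>SS. char_inv G x \<in> SS" using SS_inv(1) by blast
  show "\<forall>x\<in>SS. ii x = char_mult G x (ii (char_inv G x))" using SS_inv(3) by blast
  show "(\<exists>c\<in>X. char_mult G c c = char_one G \<and> SS = X - {c}
            \<and> bij_betw ii (X - {c}) (X - {char_one G}))
        \<or> (SS = X \<and> bij_betw ii X X)"
  proof (cases "card SS = mm")
    case True
    then have SX: "SS = X" using card_subset_eq[OF X_finite SS_sub] card_X by simp
    have "card {r\<in>SS. ii r = u} = 1" if "u \<in> X" for u
      using fib_ne1[OF that] fib_1 True by (cases "u = char_one G") auto
    then have "bij_betw ii X X" using bij_from_fibers[of X ii X] X_finite ii_in SX by auto
    then show ?thesis using SX by blast
  next
    case False
    then have lt: "card SS < mm" using card_SS by simp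
    then have f0: "card {r\<in>SS. ii r = char_one G} = 0" and s: "card SS + 1 = mm" using fib_1 by auto
    have "card (X - SS) = 1" using card_Diff_subset[OF SS_finite SS_sub] card_X s by simp
    then obtain c where c: "X - SS = {c}" by (rule card_1_singletonE)
    have cX: "c \<in> X" using c by blast
    have SXc: "SS = X - {c}" using c SS_sub by blast
    have "char_inv G c \<notin> SS"
    proof
      assume "char_inv G c \<in> SS"
      then have "char_inv G (char_inv G c) \<in> SS" using SS_inv(1) by blast
      then show False using cinv_cinv[OF cX] c by auto
    qed
    then have "char_inv G c \<in> X - SS" using char_inv_in[OF cX] by blast
    then have ci: "char_inv G c = c" using c by blast
    have cc: "char_mult G c c = char_one G"
      using cX char_nz
      by (subst (2) ci[symmetric]) (rule char_eqI, auto intro!: char_mult_in char_inv_in char_one_in)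
    have none: "ii r \<noteq> char_one G" if "r \<in> SS" for r
    proof
      assume "ii r = char_one G"
      then have "r \<in> {r\<in>SS. ii r = char_one G}" using that by blast
      then show False using f0 SS_finite by auto
    qed
    have "bij_betw ii SS (X - {char_one G})"
      using bij_from_fibers[of SS ii "X - {char_one G}"] SS_finite ii_in none fib_ne1 by auto
    then show ?thesis using SXc cX cc by auto
  qed
qed

end

theorem mainTheorem5:
  fixes G :: "('a, 'b) monoid_scheme" and J :: "'a \<Rightarrow> 'a \<Rightarrow> complex"
  assumes "comm_group G" and "finite (carrier G)" and "jacobi_function G J"
  shows "\<exists>S i. S \<subseteq> characters G
     \<and> (\<forall>x\<in>S. i x \<in> characters G)
     \<and> (\<forall>a\<in>carrier G. \<forall>b\<in>carrier G.
          J a b = (1 / of_nat (card (carrier G))) *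
                  (\<Sum>x\<in>S. i x a * char_mult G (i x) (char_inv G x) b))
     \<and> (\<forall>x\<in>S. char_inv G x \<in> S)
     \<and> (\<forall>x\<in>S. i x = char_mult G x (i (char_inv G x)))
     \<and> ((\<exists>c\<in>characters G. char_mult G c c = char_one G
            \<and> S = characters G - {c}
            \<and> bij_betw i (characters G - {c}) (characters G - {char_one G}))
        \<or> (S = characters G \<and> bij_betw i (characters G) (characters G)))"
proof -
  interpret jac G J
    using assms by (simp add: jac_def jac_axioms_def fag_def fag_axioms_def)
  show ?thesis by (rule main)
qed



end
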